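(* Let $\alpha\neq\beta$, let $(g_n)$ be as in the context, and set $w=\dfrac{\beta-x}{\beta-\alpha}$. Then for every $n\ge1$, $$g_n(x)=\frac1n\,[z^{n-1}]\;\frac{1}{(1-z)^2}\left(\frac{(\alpha-\beta)zw+\beta}{1-zw}\right)^{n},$$ where $[z^{m}]F(z)$ denotes the coefficient of $z^m$ in the power series expansion of $F$ in $z$.
   Context: Fix complex numbers $\alpha\neq\beta$. Define polynomials $g_n(x)\in\mathbb{C}[x]$ recursively by $g_0(x)=1$ and, for $n\ge1$, $$(x-\alpha)(\alpha-\beta)^{n-1}g_n(x)=\alpha(x-\beta)^n g_{n-1}(\alpha)-x(\alpha-\beta)^n g_{n-1}(x).$$ (The right-hand side vanishes at $x=\alpha$, so it is divisible by $x-\alpha$ and $g_n$ is a uniquely determined polynomial.) *)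

theory Defs
  imports "HOL-Computational_Algebra.Computational_Algebra"
begin

text \<open>The polynomials g_n, defined by g_0 = 1 and
  (x - a)(a - b)^(n-1) g_n(x) = a (x - b)^n g_(n-1)(a) - x (a - b)^n g_(n-1)(x).
  The right-hand side is divisible by (x - a), so g_n is obtained by exact
  polynomial division.\<close>
fun gpoly :: "complex \<Rightarrow> complex \<Rightarrow> nat \<Rightarrow> complex poly" where
  "gpoly a b 0 = 1"
| "gpoly a b (Suc n) =
     (smult (a * poly (gpoly a b n) a) ([:-b, 1:] ^ Suc n)
      - smult ((a - b) ^ Suc n) (pCons 0 (gpoly a b n)))
     div smult ((a - b) ^ n) [:-a, 1:]"

end

theory Submission
  imports Defs
begin

definition qf :: "complex \<Rightarrow> complex \<Rightarrow> complex fps" where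
  "qf a b = Abs_fps (\<lambda>j. if j = 0 then b else a)"

definition sc :: "complex \<Rightarrow> complex fps \<Rightarrow> complex fps" where
  "sc w f = Abs_fps (\<lambda>j. w ^ j * f $ j)"

lemma gen_id:
  fixes a b w :: complex and s :: "nat \<Rightarrow> complex"
  shows "(w - 1) * (\<Sum>j\<le>n. (b * s j + a * (\<Sum>i<j. s i)) * w^j) + (b + (a-b)*w) * (\<Sum>j\<le>n. s j * w^j)
     = a * w^(Suc n) * (\<Sum>i<n. s i) + a * s n * w^(Suc n)"
proof (induction n)
  case 0
  then show ?case by (simp add: algebra_simps)
next
  case (Suc n)
  have "(w - 1) * (\<Sum>j\<le>Suc n. (b * s j + a * (\<Sum>i<j. s i)) * w^j) + (b + (a-b)*w) * (\<Sum>j\<le>Suc n. s j * w^j)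
     = ((w - 1) * (\<Sum>j\<le>n. (b * s j + a * (\<Sum>i<j. s i)) * w^j) + (b + (a-b)*w) * (\<Sum>j\<le>n. s j * w^j))
       + w^Suc n * ((w - 1) * (b * s (Suc n) + a * (\<Sum>i<n. s i) + a * s n) + (b + (a-b)*w) * s (Suc n))"
    by (simp add: algebra_simps)
  also have "\<dots> = a * w^(Suc (Suc n)) * (\<Sum>i<Suc n. s i) + a * s (Suc n) * w^(Suc (Suc n))"
    unfolding Suc by (simp add: algebra_simps)
  finally show ?case .
qed

lemma q_mult_nth: "(qf a b * f) $ j = b * f $ j + a * (\<Sum>i<j. f $ i)"
proof (cases j)
  case 0 then show ?thesis by (simp add: fps_mult_nth qf_def)
next
  case (Suc m)
  have "(qf a b * f) $ j = (f * qf a b) $ j" by (simp add: mult.commute)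
  also have "\<dots> = (\<Sum>i=0..Suc m. f $ i * qf a b $ (Suc m - i))" by (simp add: fps_mult_nth Suc)
  also have "\<dots> = (\<Sum>i=0..m. f $ i * qf a b $ (Suc m - i)) + f $ Suc m * b"
    by (simp add: qf_def)
  also have "(\<Sum>i=0..m. f $ i * qf a b $ (Suc m - i)) = (\<Sum>i=0..m. f $ i * a)"
    by (rule sum.cong) (auto simp: qf_def)
  also have "(\<Sum>i=0..m. f $ i * a) = a * (\<Sum>i<j. f $ i)"
    by (simp add: Suc sum_distrib_left mult.commute atLeast0AtMost lessThan_Suc_atMost)
  finally show ?thesis by (simp add: Suc)
qed

lemma sc_mult: "sc w (f * g) = sc w f * sc w g"
proof (rule fps_ext)
  fix n
  have "sc w (f * g) $ n = (\<Sum>i=0..n. w^n * (f $ i * g $ (n - i)))"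
    by (simp add: sc_def fps_mult_nth sum_distrib_left)
  also have "\<dots> = (\<Sum>i=0..n. (w^i * f $ i) * (w^(n-i) * g $ (n - i)))"
  proof (rule sum.cong)
    fix i assume "i \<in> {0..n}"
    then have "w^n = w^i * w^(n-i)" by (simp add: power_add[symmetric])
    then show "w^n * (f $ i * g $ (n - i)) = (w^i * f $ i) * (w^(n-i) * g $ (n - i))" by simp
  qed simp
  also have "\<dots> = (sc w f * sc w g) $ n" by (simp add: sc_def fps_mult_nth)
  finally show "sc w (f * g) $ n = (sc w f * sc w g) $ n" .
qed

lemma sc_one: "sc w 1 = 1"
  by (rule fps_ext) (simp add: sc_def)

lemma sc_power: "sc w (f ^ n) = (sc w f) ^ n"
  by (induction n) (simp_all add: sc_one sc_mult)

lemma inner: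
  "(fps_const ((a-b)*w) * fps_X + fps_const b) * inverse (1 - fps_const w * fps_X) = sc w (qf a b)"
proof -
  let ?h = "1 - fps_const w * fps_X :: complex fps"
  have h0: "?h $ 0 \<noteq> 0" by simp
  have "sc w (qf a b) * ?h = fps_const ((a-b)*w) * fps_X + fps_const b"
  proof (rule fps_ext)
    fix j
    have "(sc w (qf a b) * ?h) $ j = sc w (qf a b) $ j - w * (fps_X * sc w (qf a b)) $ j"
      by (simp add: algebra_simps)
    also have "\<dots> = (fps_const ((a-b)*w) * fps_X + fps_const b) $ j"
    proof (cases j)
      case 0 then show ?thesis by (simp add: sc_def qf_def)
    next
      case (Suc m) then show ?thesis
        by (cases m) (auto simp: sc_def qf_def algebra_simps fps_X_nth)
    qed
    finally show "(sc w (qf a b) * ?h) $ j = (fps_const ((a-b)*w) * fps_X + fps_const b) $ j" .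
  qed
  then have "(fps_const ((a-b)*w) * fps_X + fps_const b) * inverse ?h = sc w (qf a b) * (?h * inverse ?h)"
    by (simp add: mult.assoc)
  also have "\<dots> = sc w (qf a b)" using inverse_mult_eq_1'[OF h0] by simp
  finally show ?thesis .
qed

lemma inv_sq_nth: "(inverse ((1 - fps_X) ^ 2) :: complex fps) $ k = of_nat (k + 1)"
proof -
  have "inverse ((1 - fps_X) ^ 2 :: complex fps) = (inverse (1 - fps_X)) ^ 2"
    by (simp add: fps_inverse_power)
  also have "inverse (1 - fps_X :: complex fps) = Abs_fps (\<lambda>n. 1)"
    by (metis fps_inverse_gp' fps_inverse_idempotent fps_nth_Abs_fps one_neq_zero)
  finally show ?thesis by (simp add: power2_eq_square fps_mult_nth)
qed


definition Sf :: "complex \<Rightarrow> complex \<Rightarrow> nat \<Rightarrow> complex fps" where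
  "Sf a b n = qf a b ^ n - fps_const (1 / of_nat n) * (fps_X * fps_deriv (qf a b ^ n))"

lemma Sf_nth: "Sf a b n $ j = (qf a b ^ n) $ j - (1 / of_nat n) * of_nat j * (qf a b ^ n) $ j"
  by (cases j) (simp_all add: Sf_def)

lemma Sf_nn: "n \<ge> 1 \<Longrightarrow> Sf a b n $ n = 0"
  by (simp add: Sf_nth)

lemma Sf_Suc: assumes "n \<ge> 1" shows "Sf a b (Suc n) = qf a b * Sf a b n"
proof -
  obtain m where m: "n = Suc m" using assms by (cases n) auto
  let ?q = "qf a b"
  have c1: "fps_const (1 / of_nat (Suc n)) * fps_const (of_nat (Suc n)) = (1 :: complex fps)"
    by (simp del: of_nat_Suc)
  have c2: "fps_const (1 / of_nat n) * fps_const (of_nat n) = (1 :: complex fps)"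
    using assms by (simp)
  have A: "Sf a b (Suc n) = ?q ^ Suc n - fps_X * fps_deriv ?q * ?q ^ n"
  proof -
    have "Sf a b (Suc n) = ?q ^ Suc n - (fps_const (1 / of_nat (Suc n)) * fps_const (of_nat (Suc n))) * (fps_X * fps_deriv ?q * ?q ^ n)"
      unfolding Sf_def fps_deriv_power by (simp add: algebra_simps del: of_nat_Suc fps_const_mult)
    then show ?thesis using c1 by simp
  qed
  have B: "?q * Sf a b n = ?q ^ Suc n - fps_X * fps_deriv ?q * ?q ^ n"
  proof -
    have "?q * Sf a b n = ?q ^ Suc n - (fps_const (1 / of_nat n) * fps_const (of_nat n)) * (fps_X * fps_deriv ?q * (?q * ?q ^ m))"
      unfolding Sf_def fps_deriv_power m by (simp add: algebra_simps del: of_nat_Suc fps_const_mult)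
    then show ?thesis using c2 m by simp
  qed
  show ?thesis using A B by simp
qed

definition Rf :: "complex \<Rightarrow> complex \<Rightarrow> nat \<Rightarrow> complex \<Rightarrow> complex" where
  "Rf a b n w = (\<Sum>j<n. Sf a b n $ j * w ^ j)"

lemma Rf_rec: assumes "n \<ge> 1"
  shows "(w - 1) * Rf a b (Suc n) w + (b + (a-b)*w) * Rf a b n w = a * w^(Suc n) * Rf a b n 1"
proof -
  let ?s = "\<lambda>j. Sf a b n $ j"
  have t: "Sf a b (Suc n) $ j = b * ?s j + a * (\<Sum>i<j. ?s i)" for j
    using Sf_Suc[OF assms] q_mult_nth by simp
  have e1: "Rf a b (Suc n) w = (\<Sum>j\<le>n. (b * ?s j + a * (\<Sum>i<j. ?s i)) * w^j)"
    unfolding Rf_def lessThan_Suc_atMost t ..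
  have e2: "Rf a b n w = (\<Sum>j\<le>n. ?s j * w^j)"
    unfolding Rf_def using Sf_nn[OF assms] by (simp add: lessThan_Suc_atMost[symmetric])
  have e3: "Rf a b n 1 = (\<Sum>i<n. ?s i)" by (simp add: Rf_def)
  show ?thesis unfolding e1 e2 e3 using gen_id[where w=w and b=b and a=a and s="?s" and n=n] Sf_nn[OF assms] by simp
qed

definition Gp :: "complex \<Rightarrow> complex \<Rightarrow> nat \<Rightarrow> complex poly" where
  "Gp a b n = (\<Sum>j<n. smult (Sf a b n $ j / (a-b)^j) ([:-b,1:]^j))"

lemma poly_Gp: "poly (Gp a b n) x = Rf a b n ((x - b) / (a - b))"
  by (simp add: Gp_def Rf_def poly_sum power_divide)

lemma div_lemma:
  fixes Q G :: "complex poly"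
  assumes "c \<noteq> 0" "\<And>x. poly Q x = c * (x - a) * poly G x"
  shows "Q div smult c [:-a,1:] = G"
proof -
  have "Q = smult c [:-a,1:] * G"
    by (rule poly_eq_poly_eq_iff[THEN iffD1]) (auto simp: assms algebra_simps)
  then show ?thesis using assms(1)
    by (metis nonzero_mult_div_cancel_left pCons_eq_0_iff smult_eq_0_iff zero_neq_one)
qed

lemma main_poly:
  assumes ab: "a \<noteq> b"
  shows "poly (gpoly a b (Suc m)) x = Rf a b (Suc m) ((x - b) / (a - b))"
proof (induction m arbitrary: x)
  case 0
  have "gpoly a b (Suc 0) = Gp a b 1"
  proof -
    have "gpoly a b (Suc 0) = (smult (a * 1) ([:-b, 1:] ^ Suc 0) - smult ((a - b) ^ Suc 0) (pCons 0 1))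
       div smult ((a - b) ^ 0) [:-a, 1:]" by simp
    also have "\<dots> = Gp a b 1"
      by (rule div_lemma) (simp_all add: Gp_def Sf_nth qf_def algebra_simps)
    finally show ?thesis .
  qed
  then show ?case by (simp add: poly_Gp)
next
  case (Suc m)
  let ?n = "Suc m"
  let ?d = "a - b"
  have d0: "?d \<noteq> 0" using ab by simp
  have "gpoly a b (Suc ?n) = Gp a b (Suc ?n)"
    unfolding gpoly.simps(2)[of a b ?n]
  proof (rule div_lemma)
    show "?d ^ ?n \<noteq> 0" using d0 by simp
    fix y
    define w where "w = (y - b) / ?d"
    have yb: "y - b = ?d * w" using d0 by (simp add: w_def)
    have y: "y = b + ?d * w" using yb by (simp add: algebra_simps)
    have ya: "y - a = ?d * (w - 1)" using y by (simp add: algebra_simps)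
    have ga: "poly (gpoly a b ?n) a = Rf a b ?n 1" using Suc d0 by simp
    have gy: "poly (gpoly a b ?n) y = Rf a b ?n w" using Suc w_def by simp
    have R: "(w - 1) * Rf a b (Suc ?n) w = a * w^(Suc ?n) * Rf a b ?n 1 - (b + ?d*w) * Rf a b ?n w"
      using Rf_rec[of ?n w a b] by (simp add: algebra_simps)
    have "poly (smult (a * poly (gpoly a b ?n) a) ([:-b, 1:] ^ Suc ?n)
      - smult (?d ^ Suc ?n) (pCons 0 (gpoly a b ?n))) y
      = a * poly (gpoly a b ?n) a * (y - b) ^ Suc ?n - ?d ^ Suc ?n * (y * poly (gpoly a b ?n) y)"
      by (simp del: gpoly.simps power_Suc)
    also have "\<dots> = a * Rf a b ?n 1 * (?d * w) ^ Suc ?n - ?d ^ Suc ?n * ((b + ?d * w) * Rf a b ?n w)"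
      unfolding ga gy yb by (simp only: y[symmetric])
    also have "\<dots> = ?d ^ Suc ?n * (a * w^(Suc ?n) * Rf a b ?n 1 - (b + ?d*w) * Rf a b ?n w)"
      unfolding power_mult_distrib by (simp add: algebra_simps)
    also have "\<dots> = ?d ^ ?n * (?d * (w - 1)) * Rf a b (Suc ?n) w"
      unfolding R[symmetric] by (simp add: algebra_simps)
    also have "\<dots> = ?d ^ ?n * (y - a) * poly (Gp a b (Suc ?n)) y"
      unfolding ya poly_Gp w_def ..
    finally show "poly (smult (a * poly (gpoly a b ?n) a) ([:-b, 1:] ^ Suc ?n)
      - smult (?d ^ Suc ?n) (pCons 0 (gpoly a b ?n))) y = ?d ^ ?n * (y - a) * poly (Gp a b (Suc ?n)) y" .
  qed
  then show ?case by (simp add: poly_Gp)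
qed

theorem mainTheorem5:
  fixes a b x :: complex and n :: nat
  assumes "a \<noteq> b" and "n \<ge> 1"
  defines "w \<equiv> (b - x) / (b - a)"
  shows "poly (gpoly a b n) x =
    (1 / of_nat n) * fps_nth
      (inverse ((1 - fps_X) ^ 2) *
       ((fps_const ((a - b) * w) * fps_X + fps_const b) * inverse (1 - fps_const w * fps_X)) ^ n)
      (n - 1)"
proof -
  obtain m where m: "n = Suc m" using assms(2) by (cases n) auto
  have w: "w = (x - b) / (a - b)" unfolding w_def
    by (metis minus_diff_eq minus_divide_divide)
  let ?p = "qf a b ^ n"
  have "fps_nth (inverse ((1 - fps_X) ^ 2) *
       ((fps_const ((a - b) * w) * fps_X + fps_const b) * inverse (1 - fps_const w * fps_X)) ^ n)
      (n - 1) = (sc w ?p * inverse ((1 - fps_X) ^ 2)) $ m"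
    unfolding inner sc_power m by (simp add: mult.commute)
  also have "\<dots> = (\<Sum>j=0..m. w^j * ?p $ j * of_nat (m - j + 1))"
    by (simp add: fps_mult_nth inv_sq_nth sc_def)
  finally have "(1 / of_nat n) * fps_nth (inverse ((1 - fps_X) ^ 2) *
       ((fps_const ((a - b) * w) * fps_X + fps_const b) * inverse (1 - fps_const w * fps_X)) ^ n)
      (n - 1) = (\<Sum>j=0..m. (1 / of_nat n) * (w^j * ?p $ j * of_nat (m - j + 1)))"
    by (simp add: sum_distrib_left)
  also have "\<dots> = (\<Sum>j<n. Sf a b n $ j * w ^ j)"
    unfolding m atLeast0AtMost lessThan_Suc_atMost
  proof (rule sum.cong)
    fix j assume "j \<in> {..m}"
    then have h: "of_nat (m - j + 1) = (of_nat (Suc m) - of_nat j :: complex)"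
      by (simp add: of_nat_diff)
    have nz: "(1 + of_nat m :: complex) \<noteq> 0" by (metis of_nat_Suc of_nat_eq_0_iff nat.distinct(1))
    show "(1 / of_nat (Suc m)) * (w^j * qf a b ^ Suc m $ j * of_nat (m - j + 1)) = Sf a b (Suc m) $ j * w ^ j"
      apply (simp only: h Sf_nth)
      using nz by (simp add: field_simps)
  qed simp
  also have "\<dots> = poly (gpoly a b n) x"
    unfolding m main_poly[OF assms(1)] w Rf_def m ..
  finally show ?thesis ..
qed

end
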